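(* Let $T>0$, $0\leq t<T$, $\tau=T-t$, $r\geq 0$, $\sigma>0$, $n\in\mathbb{N}$, and let $S_t>0$ and $M_t>0$ with $S_t\geq M_t$. Put $u=e^{\sigma\sqrt{\tau/n}}$, $d=u^{-1}$, $q=\frac{u-e^{-r\tau/n}}{u-d}$ and $j_0=\frac{\log(S_t/M_t)}{\sigma\sqrt{\tau/n}}$. Let $\Lambda^{j_0}_{j,k,n}$ and $J$ be as in the context, and define the discrete (Cheuk–Vorst) price of the European lookback call with floating strike at time $t$ by \[ C^{fl}_n(t) = S_t \sum_{j\in J} (1-u^{-j})\sum_{k=0}^n \Lambda^{j_0}_{j,k,n}\, q^k(1-q)^{n-k}. \] Then $C^{fl}_n(t) = S_t(V_1-V_2+V_3)$, where, with $k_{\min}=n-\lfloor \frac{n+j_0}{2}\rfloor$ and $k_{\max}=k_{\max}(j)=\lfloor\frac{n-\lfloor j_0\rfloor-1+j}{2}\rfloor$, \begin{align*} V_1&=\sum_{k=k_{\min}}^{n}(1-u^{n-j_0-2k}) \binom{n}{k}q^k(1-q)^{n-k},\\ V_2&=\sum_{k=k_{\min}}^{n-\lfloor j_0\rfloor-1}(1-u^{n-j_0-2k})\binom{n}{k+\lfloor j_0\rfloor+1} q^k(1-q)^{n-k},\\ V_3&=\sum_{j=0}^{n-\lfloor j_0\rfloor-1}(1-u^{-j}) \sum_{k=j}^{k_{\max}}\Big[\binom{n}{k-j}-\binom{n}{k-j-1}\Big] q^k(1-q)^{n-k}. \end{align*}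
   Context: Here $S_t$ is the current price of the underlying and $M_t=\min_{t^*\leq t}S_{t^*}$ its running minimum since emission. Consider the directed graph with initial node $(0,j_0)$ in which, from each node $(m,j_m)$ with $0\leq m<n$, there are exactly two edges: an "up" edge to $(m+1,j_m+1)$ and a "down" edge to $(m+1,\max(j_m-1,0))$. $\Lambda^{j_0}_{j,k,n}$ is the number of paths from $(0,j_0)$ to $(n,j)$ with exactly $k$ up jumps, and $J$ is the set of levels $j$ such that $(n,j)$ is reachable from $(0,j_0)$. $\lfloor x\rfloor$ is the integer part; binomial coefficients $\binom{n}{i}$ are $0$ for $i<0$ or $i>n$. *)

theory Defs
  imports Complex_Main
begin

text \<open>Level reached after following a path (list of moves, True = up, False = down)
  from level j: up goes to j+1, down goes to max (j-1) 0.  Levels are real since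
  the initial level j_0 need not be an integer.\<close>
fun end_level :: "real \<Rightarrow> bool list \<Rightarrow> real" where
  "end_level j [] = j"
| "end_level j (b # bs) = end_level (if b then j + 1 else max (j - 1) 0) bs"

definition Lambda :: "real \<Rightarrow> real \<Rightarrow> nat \<Rightarrow> nat \<Rightarrow> nat" where
  "Lambda j0 j k n = card {p. length p = n \<and> length (filter id p) = k \<and> end_level j0 p = j}"

definition reach_levels :: "real \<Rightarrow> nat \<Rightarrow> real set" where
  "reach_levels j0 n = {j. \<exists>p. length p = n \<and> end_level j0 p = j}"

definition binom :: "nat \<Rightarrow> int \<Rightarrow> real" where
  "binom n i = (if i < 0 \<or> i > int n then 0 else real (n choose nat i))"

definition C_fl :: "real \<Rightarrow> real \<Rightarrow> real \<Rightarrow> real \<Rightarrow> nat \<Rightarrow> real" where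
  "C_fl S u q j0 n = S * (\<Sum>j\<in>reach_levels j0 n. (1 - u powr (- j)) *
       (\<Sum>k=0..n. real (Lambda j0 j k (n::nat)) * q ^ k * (1 - q) ^ (n - k)))"

end

theory Submission
  imports Defs
begin

definition ups :: "bool list \<Rightarrow> nat" where "ups p = length (filter id p)"

fun mn :: "bool list \<Rightarrow> nat" where
  "mn [] = 0"
| "mn (b # bs) = (if b then mn bs - 1 else mn bs + 1)"

lemma ups_Cons[simp]: "ups (b # bs) = (if b then Suc (ups bs) else ups bs)"
  by (simp add: ups_def)
lemma ups_Nil[simp]: "ups [] = 0" by (simp add: ups_def)

lemma ups_le: "ups p \<le> length p" by (simp add: ups_def)

lemma end_level_eq:
  "a \<ge> 0 \<Longrightarrow> end_level a p = real (2 * ups p) - real (length p) + max a (real (mn p))"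
proof (induction p arbitrary: a)
  case Nil then show ?case by simp
next
  case (Cons b bs)
  show ?case
  proof (cases b)
    case True
    have "end_level a (b # bs) = end_level (a+1) bs" using True by simp
    also have "\<dots> = real (2 * ups bs) - real (length bs) + max (a+1) (real (mn bs))"
      using Cons by simp
    finally show ?thesis using True Cons.prems by (auto simp: of_nat_diff max_def)
  next
    case False
    have "end_level a (b # bs) = end_level (max (a-1) 0) bs" using False by simp
    also have "\<dots> = real (2 * ups bs) - real (length bs) + max (max (a-1) 0) (real (mn bs))"
      using Cons by simp
    finally show ?thesis using False Cons.prems by (auto simp: max_def)
  qed
qed

lemma mn_ge: "int (mn p) \<ge> int (length p) - 2 * int (ups p)"
  by (induction p) auto

lemma mn_le: "mn p + ups p \<le> length p"
  by (induction p) auto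

lemma fin_paths: "finite {p::bool list. length p = n \<and> P p}"
proof -
  have "{p::bool list. length p = n \<and> P p} \<subseteq> {xs. set xs \<subseteq> UNIV \<and> length xs = n}" by auto
  then show ?thesis using finite_subset finite_lists_length_eq[OF finite_UNIV] by blast
qed

lemma split_len: "{p. length p = Suc n \<and> P p} =
   Cons True ` {p. length p = n \<and> P (True#p)} \<union> Cons False ` {p. length p = n \<and> P (False#p)}"
proof (intro equalityI subsetI)
  fix x assume "x \<in> {p. length p = Suc n \<and> P p}"
  then obtain b xs where "x = b # xs" "length xs = n" "P (b#xs)" by (auto simp: length_Suc_conv)
  then show "x \<in> Cons True ` {p. length p = n \<and> P (True#p)} \<union> Cons False ` {p. length p = n \<and> P (False#p)}"
    by (cases b) auto
qed auto

lemma card_split: "card {p. length p = Suc n \<and> P p} =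
   card {p. length p = n \<and> P (True#p)} + card {p. length p = n \<and> P (False#p)}"
  unfolding split_len
  by (subst card_Un_disjoint) (auto simp: fin_paths card_image)

lemma binom_Suc: "binom (Suc n) i = binom n (i - 1) + binom n i"
  unfolding binom_def
proof -
  consider "i < 0" | "i = 0" | "0 < i \<and> i \<le> int n" | "i = int n + 1" | "i > int n + 1" by linarith
  then show "(if i < 0 \<or> int (Suc n) < i then 0 else real (Suc n choose nat i)) =
    (if i - 1 < 0 \<or> int n < i - 1 then 0 else real (n choose nat (i - 1))) +
    (if i < 0 \<or> int n < i then 0 else real (n choose nat i))"
  proof cases
    case 3
    define m where "m = nat (i - 1)"
    have m: "i = int (Suc m)" "m < n" using 3 unfolding m_def by auto
    have "nat i = Suc m" "nat (i - 1) = m" using m by auto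
    then show ?thesis using m by simp
  next
    case 4
    then have "nat i = Suc n" by simp
    then show ?thesis using 4 by simp
  qed auto
qed

lemma binom_sym: "binom n (int n - i) = binom n i"
proof (cases "i < 0 \<or> i > int n")
  case True then show ?thesis by (auto simp: binom_def)
next
  case False
  then obtain m where m: "i = int m" "m \<le> n" by (metis linorder_not_le nat_0_le nat_le_iff)
  then have "nat (int n - i) = n - m" by simp
  then show ?thesis using m by (simp add: binom_def binomial_symmetric[symmetric])
qed

lemma cnt_m1: "card {p. length p = n \<and> int (ups p) = k \<and> int (mn p) \<le> -1} = 0"
  by simp

lemma cnt:
  assumes "h \<ge> -1"
  shows "real (card {p. length p = n \<and> int (ups p) = k \<and> int (mn p) \<le> h}) =
    (if 2*k - int n \<ge> -h then binom n k - binom n (k+h+1) else 0)"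
  using assms
proof (induction n arbitrary: k h)
  case 0
  show ?case
  proof (cases "h = -1")
    case True then show ?thesis by (simp add: binom_def)
  next
    case False
    then have h: "h \<ge> 0" using 0 by simp
    have "{p. length p = 0 \<and> int (ups p) = k \<and> int (mn p) \<le> h} = (if k = 0 then {[]} else {})"
      using h by auto
    then show ?thesis using h by (auto simp: binom_def)
  qed
next
  case (Suc n)
  show ?case
  proof (cases "h = -1")
    case True then show ?thesis by (simp add: binom_def)
  next
    case False
    then have h: "h \<ge> 0" using Suc.prems by simp
    have e1: "{p. length p = n \<and> int (ups (True#p)) = k \<and> int (mn (True#p)) \<le> h}
       = {p. length p = n \<and> int (ups p) = k - 1 \<and> int (mn p) \<le> h + 1}"
      using h by auto
    have e2: "{p. length p = n \<and> int (ups (False#p)) = k \<and> int (mn (False#p)) \<le> h}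
       = {p. length p = n \<and> int (ups p) = k \<and> int (mn p) \<le> h - 1}"
      using h by auto
    have "real (card {p. length p = Suc n \<and> int (ups p) = k \<and> int (mn p) \<le> h})
      = real (card {p. length p = n \<and> int (ups p) = k - 1 \<and> int (mn p) \<le> h + 1})
      + real (card {p. length p = n \<and> int (ups p) = k \<and> int (mn p) \<le> h - 1})"
      using card_split[of n "\<lambda>p. int (ups p) = k \<and> int (mn p) \<le> h"] e1 e2 by simp
    also have "\<dots> = (if 2*(k-1) - int n \<ge> -(h+1) then binom n (k-1) - binom n (k-1+(h+1)+1) else 0)
       + (if 2*k - int n \<ge> -(h-1) then binom n k - binom n (k+(h-1)+1) else 0)"
      using Suc.IH[of "h+1" "k-1"] Suc.IH[of "h-1" k] h by simp
    also have "\<dots> = (if 2*k - int (Suc n) \<ge> -h then binom (Suc n) k - binom (Suc n) (k+h+1) else 0)"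
      using binom_Suc[of n k] binom_Suc[of n "k+h+1"] by (simp add: algebra_simps)
    finally show ?thesis .
  qed
qed

lemma sum_restrict:
  assumes "finite A" "finite B" "\<forall>x\<in>A-B. F x = 0"
  shows "sum F A = sum (\<lambda>x. if x\<in>A then F x else 0) B"
proof -
  have "sum F A = sum F (A \<inter> B)"
    using assms by (intro sum.mono_neutral_right) auto
  also have "\<dots> = sum F (B \<inter> A)" by (simp add: Int_commute)
  also have "\<dots> = sum (\<lambda>x. if x\<in>A then F x else 0) B"
    using assms(2) by (rule sum.inter_restrict)
  finally show ?thesis .
qed

lemma fin_paths0: "finite {p::bool list. length p = n}"
  using fin_paths[of n "\<lambda>_. True"] by simp

lemma L1:
  fixes a u q S :: real and n :: nat
  defines "W \<equiv> \<lambda>p. (1 - u powr (- end_level a p)) * q powi int (ups p) * (1-q) powi (int n - int (ups p))"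
  shows "C_fl S u q a n = S * sum W {p. length p = n}"
proof -
  let ?P = "{p::bool list. length p = n}"
  let ?c = "\<lambda>k::nat. q ^ k * (1 - q) ^ (n - k)"
  have R: "reach_levels a n = end_level a ` ?P" by (auto simp: reach_levels_def)
  have inner: "(1 - u powr (- j)) * (\<Sum>k=0..n. real (Lambda a j k n) * ?c k)
      = sum W {p \<in> ?P. end_level a p = j}" for j
  proof -
    have "(\<Sum>k=0..n. real (Lambda a j k n) * ?c k)
        = (\<Sum>k\<in>{0..n}. \<Sum>p\<in>{x \<in> {p \<in> ?P. end_level a p = j}. ups x = k}. ?c (ups p))"
    proof (rule sum.cong[OF refl])
      fix k assume "k \<in> {0..n}"
      have "{p. length p = n \<and> length (filter id p) = k \<and> end_level a p = j}
           = {x \<in> {p \<in> ?P. end_level a p = j}. ups x = k}" by (auto simp: ups_def)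
      moreover have "(\<Sum>p\<in>{x \<in> {p \<in> ?P. end_level a p = j}. ups x = k}. ?c (ups p))
           = (\<Sum>p\<in>{x \<in> {p \<in> ?P. end_level a p = j}. ups x = k}. ?c k)"
        by (rule sum.cong) auto
      ultimately show "real (Lambda a j k n) * ?c k = (\<Sum>p\<in>{x \<in> {p \<in> ?P. end_level a p = j}. ups x = k}. ?c (ups p))"
        unfolding Lambda_def by simp
    qed
    also have "\<dots> = (\<Sum>p\<in>{p \<in> ?P. end_level a p = j}. ?c (ups p))"
      by (rule sum.group) (auto simp: fin_paths ups_def)
    finally have "(\<Sum>k=0..n. real (Lambda a j k n) * ?c k) = (\<Sum>p\<in>{p \<in> ?P. end_level a p = j}. ?c (ups p))" .
    moreover have "(1 - u powr (- j)) * ?c (ups p) = W p" if "p \<in> {p \<in> ?P. end_level a p = j}" for p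
    proof -
      have "ups p \<le> n" using that ups_le by auto
      then have "int n - int (ups p) = int (n - ups p)" by simp
      then have "(1-q) powi (int n - int (ups p)) = (1-q) ^ (n - ups p)"
        by (metis power_int_of_nat)
      moreover have "end_level a p = j" using that by simp
      ultimately show ?thesis unfolding W_def by (simp add: mult.assoc)
    qed
    ultimately show ?thesis by (simp add: sum_distrib_left)
  qed
  have "C_fl S u q a n = S * (\<Sum>j\<in>reach_levels a n. sum W {p \<in> ?P. end_level a p = j})"
    unfolding C_fl_def using inner by (simp add: mult.assoc)
  also have "(\<Sum>j\<in>reach_levels a n. sum W {p \<in> ?P. end_level a p = j}) = sum W ?P"
    unfolding R by (rule sum.group) (auto simp: fin_paths0)
  finally show ?thesis .
qed

lemma ups_le_n: "length p = n \<Longrightarrow> int (ups p) \<le> int n"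
  using ups_le[of p] by simp

lemma L3:
  fixes a u q :: real and n :: nat
  assumes a0: "a \<ge> 0"
  defines "W \<equiv> \<lambda>p. (1 - u powr (- end_level a p)) * q powi int (ups p) * (1-q) powi (int n - int (ups p))"
  defines "H \<equiv> \<lambda>k::int. (1 - u powr (real n - a - 2 * real_of_int k)) * q powi k * (1 - q) powi (int n - k)"
  shows "sum W {p. length p = n \<and> int (mn p) \<le> \<lfloor>a\<rfloor>} =
    (\<Sum>k\<in>{0..int n}. (if - \<lfloor>a\<rfloor> \<le> 2*k - int n then binom n k - binom n (k+\<lfloor>a\<rfloor>+1) else 0) * H k)"
proof -
  let ?P1 = "{p. length p = n \<and> int (mn p) \<le> \<lfloor>a\<rfloor>}"
  have f0: "\<lfloor>a\<rfloor> \<ge> 0" using a0 by simp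
  have "sum W ?P1 = (\<Sum>k\<in>{0..int n}. sum W {x\<in>?P1. int (ups x) = k})"
    by (rule sum.group[symmetric]) (auto simp: fin_paths ups_le)
  also have "\<dots> = (\<Sum>k\<in>{0..int n}. (if - \<lfloor>a\<rfloor> \<le> 2*k - int n then binom n k - binom n (k+\<lfloor>a\<rfloor>+1) else 0) * H k)"
  proof (rule sum.cong[OF refl])
    fix k assume "k \<in> {0..int n}"
    have "sum W {x\<in>?P1. int (ups x) = k} = sum (\<lambda>_. H k) {x\<in>?P1. int (ups x) = k}"
    proof (rule sum.cong[OF refl])
      fix x assume x: "x \<in> {x\<in>?P1. int (ups x) = k}"
      then have "real (mn x) \<le> a"
        by (metis (mono_tags, lifting) le_floor_iff mem_Collect_eq of_int_of_nat_eq)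
      then have "end_level a x = real (2 * ups x) - real n + a"
        using end_level_eq[OF a0, of x] x by simp
      then have "- end_level a x = real n - a - 2 * real_of_int k" using x by simp
      then show "W x = H k" unfolding W_def H_def using x by simp
    qed
    also have "\<dots> = real (card {p. length p = n \<and> int (ups p) = k \<and> int (mn p) \<le> \<lfloor>a\<rfloor>}) * H k"
    proof -
      have "{x\<in>?P1. int (ups x) = k} = {p. length p = n \<and> int (ups p) = k \<and> int (mn p) \<le> \<lfloor>a\<rfloor>}" by auto
      then show ?thesis by simp
    qed
    also have "\<dots> = (if - \<lfloor>a\<rfloor> \<le> 2*k - int n then binom n k - binom n (k+\<lfloor>a\<rfloor>+1) else 0) * H k"
      using cnt[of "\<lfloor>a\<rfloor>" n k] f0 by simp
    finally show "sum W {x\<in>?P1. int (ups x) = k} = \<dots>" .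
  qed
  finally show ?thesis .
qed

lemma card_exact:
  assumes D1: "D \<ge> 1" and j0: "2*k - int n + D \<ge> 0"
  shows "real (card {p. length p = n \<and> int (ups p) = k \<and> int (mn p) = D}) = binom n (k + D) - binom n (k+D+1)"
proof -
  let ?A = "{p. length p = n \<and> int (ups p) = k \<and> int (mn p) \<le> D}"
  let ?B = "{p. length p = n \<and> int (ups p) = k \<and> int (mn p) \<le> D - 1}"
  have eq: "{p. length p = n \<and> int (ups p) = k \<and> int (mn p) = D} = ?A - ?B" by auto
  have sub: "?B \<subseteq> ?A" by auto
  have fB: "finite ?B" by (rule fin_paths)
  have fA: "finite ?A" by (rule fin_paths)
  have "card (?A - ?B) = card ?A - card ?B" using card_Diff_subset[OF fB sub] .
  moreover have "card ?B \<le> card ?A" using card_mono[OF fA sub] .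
  ultimately have c: "real (card (?A - ?B)) = real (card ?A) - real (card ?B)" by simp
  have cA: "real (card ?A) = binom n k - binom n (k+D+1)"
    using cnt[of D n k] D1 j0 by simp
  show ?thesis
  proof (cases "2*k - int n + D = 0")
    case True
    have cB: "real (card ?B) = 0" using cnt[of "D-1" n k] D1 True by simp
    have "k + D = int n - k" using True by simp
    then have "binom n (k + D) = binom n (int n - k)" by (rule arg_cong)
    then have "binom n (k + D) = binom n k" using binom_sym[of n k] by simp
    then show ?thesis unfolding eq c cA cB by simp
  next
    case False
    have cB: "real (card ?B) = binom n k - binom n (k + D)" using cnt[of "D-1" n k] D1 False j0 by simp
    show ?thesis unfolding eq c cA cB by simp
  qed
qed

lemma L5:
  fixes a u q :: real and n :: nat
  assumes a0: "a \<ge> 0"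
  defines "W \<equiv> \<lambda>p. (1 - u powr (- end_level a p)) * q powi int (ups p) * (1-q) powi (int n - int (ups p))"
  shows "sum W {p. length p = n \<and> \<not> int (mn p) \<le> \<lfloor>a\<rfloor>} =
    (\<Sum>j\<in>{0..int n - \<lfloor>a\<rfloor> - 1}. (1 - u powr (- real_of_int j)) *
       (\<Sum>k\<in>{j..\<lfloor>(real n - real_of_int \<lfloor>a\<rfloor> - 1 + real_of_int j) / 2\<rfloor>}.
          (binom n (k - j) - binom n (k - j - 1)) * q powi k * (1 - q) powi (int n - k)))"
proof -
  define f where "f = \<lfloor>a\<rfloor>"
  define km where "km = (\<lambda>j::int. \<lfloor>(real n - real_of_int f - 1 + real_of_int j) / 2\<rfloor>)"
  define K where "K = (\<lambda>(j::int, k::int). (1 - u powr (- real_of_int j)) * q powi k * (1 - q) powi (int n - k))"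
  define T where "T = Sigma {0..int n - f - 1} (\<lambda>j. {j..km j})"
  define g where "g = (\<lambda>p. (2 * int (ups p) - int n + int (mn p), int (ups p)))"
  define P2 where "P2 = {p. length p = n \<and> \<not> int (mn p) \<le> f}"
  have kmI: "k \<le> km j \<longleftrightarrow> 2*k \<le> int n - f - 1 + j" for j k
  proof -
    have "k \<le> km j \<longleftrightarrow> real_of_int k \<le> (real n - real_of_int f - 1 + real_of_int j) / 2"
      unfolding km_def by (rule le_floor_iff)
    also have "\<dots> \<longleftrightarrow> real_of_int (2*k) \<le> real_of_int (int n - f - 1 + j)" by (simp add: mult.commute)
    also have "\<dots> \<longleftrightarrow> 2*k \<le> int n - f - 1 + j" by (rule of_int_le_iff)
    finally show ?thesis .
  qed
  have fT: "finite T" unfolding T_def by auto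
  have rhs: "(\<Sum>j\<in>{0..int n - f - 1}. (1 - u powr (- real_of_int j)) *
       (\<Sum>k\<in>{j..km j}. (binom n (k - j) - binom n (k - j - 1)) * q powi k * (1 - q) powi (int n - k)))
     = (\<Sum>x\<in>T. (binom n (snd x - fst x) - binom n (snd x - fst x - 1)) * K x)"
  proof -
    have "(\<Sum>x\<in>T. (binom n (snd x - fst x) - binom n (snd x - fst x - 1)) * K x)
       = (\<Sum>j\<in>{0..int n - f - 1}. \<Sum>k\<in>{j..km j}. (binom n (k - j) - binom n (k - j - 1)) * K (j,k))"
      unfolding T_def by (subst sum.Sigma) (auto intro!: sum.cong simp: split_beta)
    also have "\<dots> = (\<Sum>j\<in>{0..int n - f - 1}. (1 - u powr (- real_of_int j)) *
       (\<Sum>k\<in>{j..km j}. (binom n (k - j) - binom n (k - j - 1)) * q powi k * (1 - q) powi (int n - k)))"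
      unfolding K_def by (auto simp: sum_distrib_left intro!: sum.cong simp: algebra_simps)
    finally show ?thesis by simp
  qed
  have lhs: "sum W P2 = (\<Sum>x\<in>T. sum W {p\<in>P2. g p = x})"
  proof (rule sum.group[symmetric])
    show "finite P2" unfolding P2_def by (rule fin_paths)
    show "finite T" by (rule fT)
    show "g ` P2 \<subseteq> T"
    proof
      fix y assume "y \<in> g ` P2"
      then obtain p where p: "p \<in> P2" "y = g p" by auto
      have "int (mn p) \<ge> int n - 2 * int (ups p)" using mn_ge[of p] p(1) unfolding P2_def by simp
      moreover have "mn p + ups p \<le> n" using mn_le[of p] p(1) unfolding P2_def by simp
      moreover have "int (mn p) \<ge> f + 1" using p(1) unfolding P2_def by simp
      ultimately show "y \<in> T" unfolding p(2) g_def T_def using kmI by auto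
    qed
  qed
  have inner: "sum W {p\<in>P2. g p = x} = (binom n (snd x - fst x) - binom n (snd x - fst x - 1)) * K x"
    if x: "x \<in> T" for x
  proof -
    obtain j k where jk: "x = (j, k)" by (cases x)
    define D where "D = int n + j - 2*k"
    have j0: "j \<ge> 0" and kj: "j \<le> k" and kk: "2*k \<le> int n - f - 1 + j"
      using x kmI unfolding jk T_def by auto
    have Df: "D \<ge> f + 1" using kk unfolding D_def by simp
    have f0: "f \<ge> 0" using a0 unfolding f_def by simp
    have set: "{p\<in>P2. g p = x} = {p. length p = n \<and> int (ups p) = k \<and> int (mn p) = D}"
      using Df unfolding P2_def g_def jk D_def by auto
    have "sum W {p\<in>P2. g p = x} = sum (\<lambda>_. K x) {p\<in>P2. g p = x}"
    proof (rule sum.cong[OF refl])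
      fix p assume p: "p \<in> {p\<in>P2. g p = x}"
      then have pp: "length p = n" "int (ups p) = k" "int (mn p) = D" using set by auto
      have "a < real_of_int f + 1" unfolding f_def by linarith
      then have "a \<le> real (mn p)" using pp(3) Df
        by (metis add.commute le_less_trans less_le of_int_of_nat_eq of_int_le_iff of_int_add of_int_1 not_le)
      then have "end_level a p = real (2 * ups p) - real n + real (mn p)"
        using end_level_eq[OF a0, of p] pp by simp
      also have "\<dots> = real_of_int j"
      proof -
        have "real (2 * ups p) - real n + real (mn p) = real_of_int (2 * int (ups p) - int n + int (mn p))" by simp
        also have "2 * int (ups p) - int n + int (mn p) = j" using pp unfolding D_def by simp
        finally show ?thesis .
      qed
      finally show "W p = K x" unfolding W_def K_def jk using pp by simp
    qed
    also have "\<dots> = real (card {p. length p = n \<and> int (ups p) = k \<and> int (mn p) = D}) * K x"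
      using set by simp
    also have "\<dots> = (binom n (k + D) - binom n (k + D + 1)) * K x"
      using card_exact[of D k n] Df f0 j0 unfolding D_def by simp
    also have "binom n (k + D) = binom n (k - j)"
    proof -
      have "k + D = int n - (k - j)" unfolding D_def by simp
      then have "binom n (k + D) = binom n (int n - (k - j))" by (rule arg_cong)
      then show ?thesis using binom_sym[of n "k - j"] by simp
    qed
    also have "binom n (k + D + 1) = binom n (k - j - 1)"
    proof -
      have "k + D + 1 = int n - (k - j - 1)" unfolding D_def by simp
      then have "binom n (k + D + 1) = binom n (int n - (k - j - 1))" by (rule arg_cong)
      then show ?thesis using binom_sym[of n "k - j - 1"] by simp
    qed
    finally show ?thesis unfolding jk by simp
  qed
  have "sum W P2 = (\<Sum>x\<in>T. (binom n (snd x - fst x) - binom n (snd x - fst x - 1)) * K x)"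
    unfolding lhs using inner by (rule sum.cong[OF refl])
  then show ?thesis using rhs unfolding P2_def f_def km_def by simp
qed

lemma L4:
  fixes a u q :: real and n :: nat
  assumes a0: "a \<ge> 0"
  defines "H \<equiv> \<lambda>k::int. (1 - u powr (real n - a - 2 * real_of_int k)) * q powi k * (1 - q) powi (int n - k)"
  shows "(\<Sum>k\<in>{0..int n}. (if - \<lfloor>a\<rfloor> \<le> 2*k - int n then binom n k - binom n (k+\<lfloor>a\<rfloor>+1) else 0) * H k) =
    (\<Sum>k\<in>{int n - \<lfloor>(real n + a) / 2\<rfloor>..int n}. (1 - u powr (real n - a - 2 * real_of_int k)) *
                     binom n k * q powi k * (1 - q) powi (int n - k))
  - (\<Sum>k\<in>{int n - \<lfloor>(real n + a) / 2\<rfloor>..int n - \<lfloor>a\<rfloor> - 1}. (1 - u powr (real n - a - 2 * real_of_int k)) *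
                     binom n (k + \<lfloor>a\<rfloor> + 1) * q powi k * (1 - q) powi (int n - k))"
proof -
  define f where "f = \<lfloor>a\<rfloor>"
  define kmin where "kmin = int n - \<lfloor>(real n + a) / 2\<rfloor>"
  have kminI: "kmin \<le> k \<longleftrightarrow> - f \<le> 2*k - int n" for k
  proof -
    have "kmin \<le> k \<longleftrightarrow> int n - k \<le> \<lfloor>(real n + a) / 2\<rfloor>" unfolding kmin_def by linarith
    also have "\<dots> \<longleftrightarrow> real_of_int (int n - k) \<le> (real n + a) / 2" by (rule le_floor_iff)
    also have "\<dots> \<longleftrightarrow> real_of_int (int n - 2*k) \<le> a" by (simp add: field_simps)
    also have "\<dots> \<longleftrightarrow> int n - 2*k \<le> f" unfolding f_def by (rule le_floor_iff[symmetric])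
    finally show ?thesis by linarith
  qed
  have f0: "f \<ge> 0" using a0 unfolding f_def by simp
  have V1: "(\<Sum>k\<in>{kmin..int n}. (1 - u powr (real n - a - 2 * real_of_int k)) *
                     binom n k * q powi k * (1 - q) powi (int n - k))
     = (\<Sum>k\<in>{0..int n}. if - f \<le> 2*k - int n then binom n k * H k else 0)"
  proof -
    have "(\<Sum>k\<in>{kmin..int n}. (1 - u powr (real n - a - 2 * real_of_int k)) *
                     binom n k * q powi k * (1 - q) powi (int n - k))
       = (\<Sum>k\<in>{0..int n}. if k \<in> {kmin..int n} then (1 - u powr (real n - a - 2 * real_of_int k)) *
                     binom n k * q powi k * (1 - q) powi (int n - k) else 0)"
      by (rule sum_restrict) (auto simp: binom_def)
    also have "\<dots> = (\<Sum>k\<in>{0..int n}. if - f \<le> 2*k - int n then binom n k * H k else 0)"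
      by (rule sum.cong[OF refl]) (auto simp: kminI H_def)
    finally show ?thesis .
  qed
  have V2: "(\<Sum>k\<in>{kmin..int n - f - 1}. (1 - u powr (real n - a - 2 * real_of_int k)) *
                     binom n (k + f + 1) * q powi k * (1 - q) powi (int n - k))
     = (\<Sum>k\<in>{0..int n}. if - f \<le> 2*k - int n then binom n (k + f + 1) * H k else 0)"
  proof -
    have "(\<Sum>k\<in>{kmin..int n - f - 1}. (1 - u powr (real n - a - 2 * real_of_int k)) *
                     binom n (k + f + 1) * q powi k * (1 - q) powi (int n - k))
       = (\<Sum>k\<in>{0..int n}. if k \<in> {kmin..int n - f - 1} then (1 - u powr (real n - a - 2 * real_of_int k)) *
                     binom n (k + f + 1) * q powi k * (1 - q) powi (int n - k) else 0)"
    proof (rule sum_restrict)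
      show "\<forall>x\<in>{kmin..int n - f - 1} - {0..int n}. (1 - u powr (real n - a - 2 * real_of_int x)) *
                     binom n (x + f + 1) * q powi x * (1 - q) powi (int n - x) = 0"
      proof
        fix x assume x: "x \<in> {kmin..int n - f - 1} - {0..int n}"
        then have "x < 0" "- f \<le> 2*x - int n" using kminI f0 by auto
        then have "x + f + 1 > int n" by linarith
        then show "(1 - u powr (real n - a - 2 * real_of_int x)) *
                     binom n (x + f + 1) * q powi x * (1 - q) powi (int n - x) = 0" by (simp add: binom_def)
      qed
    qed auto
    also have "\<dots> = (\<Sum>k\<in>{0..int n}. if - f \<le> 2*k - int n then binom n (k + f + 1) * H k else 0)"
      by (rule sum.cong[OF refl]) (auto simp: kminI H_def binom_def)
    finally show ?thesis .
  qed
  have "(\<Sum>k\<in>{0..int n}. (if - f \<le> 2*k - int n then binom n k - binom n (k+f+1) else 0) * H k)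
     = (\<Sum>k\<in>{0..int n}. (if - f \<le> 2*k - int n then binom n k * H k else 0)
                        - (if - f \<le> 2*k - int n then binom n (k + f + 1) * H k else 0))"
    by (rule sum.cong[OF refl]) (auto simp: algebra_simps)
  also have "\<dots> = (\<Sum>k\<in>{0..int n}. if - f \<le> 2*k - int n then binom n k * H k else 0)
     - (\<Sum>k\<in>{0..int n}. if - f \<le> 2*k - int n then binom n (k + f + 1) * H k else 0)"
    by (rule sum_subtractf)
  finally show ?thesis unfolding V1[symmetric] V2[symmetric] unfolding kmin_def f_def .
qed

lemma final:
  fixes a u q S :: real and n :: nat
  assumes a0: "a \<ge> 0"
  shows "C_fl S u q a n = S * ((\<Sum>k\<in>{int n - \<lfloor>(real n + a) / 2\<rfloor>..int n}. (1 - u powr (real n - a - 2 * real_of_int k)) *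
                     binom n k * q powi k * (1 - q) powi (int n - k))
  - (\<Sum>k\<in>{int n - \<lfloor>(real n + a) / 2\<rfloor>..int n - \<lfloor>a\<rfloor> - 1}. (1 - u powr (real n - a - 2 * real_of_int k)) *
                     binom n (k + \<lfloor>a\<rfloor> + 1) * q powi k * (1 - q) powi (int n - k))
  + (\<Sum>j\<in>{0..int n - \<lfloor>a\<rfloor> - 1}. (1 - u powr (- real_of_int j)) *
       (\<Sum>k\<in>{j..\<lfloor>(real n - real_of_int \<lfloor>a\<rfloor> - 1 + real_of_int j) / 2\<rfloor>}.
          (binom n (k - j) - binom n (k - j - 1)) * q powi k * (1 - q) powi (int n - k))))"
proof -
  define W where "W \<equiv> \<lambda>p. (1 - u powr (- end_level a p)) * q powi int (ups p) * (1-q) powi (int n - int (ups p))"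
  have "{p::bool list. length p = n} = {p. length p = n \<and> int (mn p) \<le> \<lfloor>a\<rfloor>} \<union> {p. length p = n \<and> \<not> int (mn p) \<le> \<lfloor>a\<rfloor>}"
    by auto
  then have "sum W {p. length p = n} = sum W {p. length p = n \<and> int (mn p) \<le> \<lfloor>a\<rfloor>} + sum W {p. length p = n \<and> \<not> int (mn p) \<le> \<lfloor>a\<rfloor>}"
    by (simp add: sum.union_disjoint fin_paths disjoint_iff)
  then show ?thesis
    using L1[of S u q a n] L3[OF a0, where u=u and q=q and n=n] L4[OF a0, where u=u and q=q and n=n] L5[OF a0, where u=u and q=q and n=n]
    unfolding W_def by simp
qed

theorem theorem2p2:
  fixes T t r \<sigma> S M :: real and n :: nat
  assumes "T > 0" and "0 \<le> t" and "t < T" and "r \<ge> 0" and "\<sigma> > 0" and "n \<ge> 1"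
    and "S > 0" and "M > 0" and "S \<ge> M"
  shows "let \<tau> = T - t;
             u = exp (\<sigma> * sqrt (\<tau> / real n));
             d = inverse u;
             q = (u - exp (- r * \<tau> / real n)) / (u - d);
             j0 = ln (S / M) / (\<sigma> * sqrt (\<tau> / real n));
             kmin = int n - \<lfloor>(real n + j0) / 2\<rfloor>;
             kmax = (\<lambda>j::int. \<lfloor>(real n - real_of_int \<lfloor>j0\<rfloor> - 1 + real_of_int j) / 2\<rfloor>);
             V1 = (\<Sum>k\<in>{kmin..int n}. (1 - u powr (real n - j0 - 2 * real_of_int k)) *
                     binom n k * q powi k * (1 - q) powi (int n - k));
             V2 = (\<Sum>k\<in>{kmin..int n - \<lfloor>j0\<rfloor> - 1}. (1 - u powr (real n - j0 - 2 * real_of_int k)) *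
                     binom n (k + \<lfloor>j0\<rfloor> + 1) * q powi k * (1 - q) powi (int n - k));
             V3 = (\<Sum>j\<in>{0..int n - \<lfloor>j0\<rfloor> - 1}. (1 - u powr (- real_of_int j)) *
                     (\<Sum>k\<in>{j..kmax j}. (binom n (k - j) - binom n (k - j - 1)) *
                        q powi k * (1 - q) powi (int n - k)))
         in C_fl S u q j0 n = S * (V1 - V2 + V3)"
proof -
  have tau: "T - t > 0" using assms by simp
  have n0: "real n > 0" using assms by simp
  have den: "\<sigma> * sqrt ((T - t) / real n) > 0" using tau n0 assms by simp
  have "S / M \<ge> 1" using assms by simp
  then have "ln (S / M) \<ge> 0" by simp
  then have a0: "ln (S / M) / (\<sigma> * sqrt ((T - t) / real n)) \<ge> 0" using den by simp
  show ?thesis unfolding Let_def by (rule final[OF a0])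
qed

end
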